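(* Let $-\infty\le a<b\le\infty$, let $f,g$ be differentiable on $(a,b)$ with $g'\ne0$ on $(a,b)$, and suppose $\lim_{x\to b^-}f(x)=\lim_{x\to b^-}g(x)=0$. Let $H_{f,g}=\frac{f'}{g'}g-f$ and $H_{f,g}(a^+)=\lim_{x\to a^+}H_{f,g}(x)\in[-\infty,\infty]$. (A) Suppose there is $c\in(a,b)$ such that $f'/g'$ is strictly increasing on $(a,c)$ and strictly decreasing on $(c,b)$. Then: (i) if either $g'>0$ and $H_{f,g}(a^+)\le0$, or $g'<0$ and $H_{f,g}(a^+)\ge0$, then $f/g$ is strictly decreasing on $(a,b)$; (ii) if either $g'>0$ and $H_{f,g}(a^+)>0$, or $g'<0$ and $H_{f,g}(a^+)<0$, then there is a unique $x_b\in(a,b)$ such that $f/g$ is strictly increasing on $(a,x_b)$ and strictly decreasing on $(x_b,b)$. (B) Suppose there is $c\in(a,b)$ such that $f'/g'$ is strictly decreasing on $(a,c)$ and strictly increasing on $(c,b)$. Then: (i) if either $g'>0$ and $H_{f,g}(a^+)\ge0$, or $g'<0$ and $H_{f,g}(a^+)\le0$, then $f/g$ is strictly increasing on $(a,b)$; (ii) if either $g'>0$ and $H_{f,g}(a^+)<0$, or $g'<0$ and $H_{f,g}(a^+)>0$, then there is a unique $x_b\in(a,b)$ such that $f/g$ is strictly decreasing on $(a,x_b)$ and strictly increasing on $(x_b,b)$.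
   Context: $H_{f,g}(x)=\frac{f'(x)}{g'(x)}g(x)-f(x)$ for $x\in(a,b)$, defined for differentiable $f,g$ with $g'\ne0$ on $(a,b)$. *)

theory Defs
  imports "HOL-Analysis.Analysis"
begin

definition eivl :: "ereal \<Rightarrow> ereal \<Rightarrow> real set" where
  "eivl a b = {x. a < ereal x \<and> ereal x < b}"

definition at_left_e :: "ereal \<Rightarrow> real filter" where
  "at_left_e b = (if b = \<infinity> then at_top else at_left (real_of_ereal b))"

definition at_right_e :: "ereal \<Rightarrow> real filter" where
  "at_right_e a = (if a = -\<infinity> then at_bot else at_right (real_of_ereal a))"

definition H :: "(real \<Rightarrow> real) \<Rightarrow> (real \<Rightarrow> real) \<Rightarrow> real \<Rightarrow> real" where
  "H f g x = deriv f x / deriv g x * g x - f x"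

end

theory Submission
  imports Defs
begin


lemma eivl_btw:
  assumes "x \<in> eivl a b" "y \<in> eivl a b" "x \<le> z" "z \<le> y"
  shows "z \<in> eivl a b"
proof -
  have "a < ereal x" "ereal y < b" using assms(1,2) by (auto simp: eivl_def)
  moreover have "ereal x \<le> ereal z" "ereal z \<le> ereal y" using assms(3,4) by auto
  ultimately have "a < ereal z" "ereal z < b" by (meson less_le_trans, meson le_less_trans)
  then show ?thesis unfolding eivl_def by simp
qed

lemma EB:
  assumes "x \<in> eivl a b"
  shows "eventually (\<lambda>y. y \<in> eivl a b \<and> x < y) (at_left_e b)"
proof (cases b)
  case (real B)
  then have xB: "x < B" using assms by (auto simp: eivl_def)
  have "eventually (\<lambda>y. y \<in> {x<..<B}) (at_left B)" using eventually_at_left_real[OF xB] .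
  then show ?thesis unfolding at_left_e_def using real assms
    by (auto simp: eivl_def elim!: eventually_mono intro: less_trans)
next
  case PInf
  have ax: "a < ereal x" using assms by (simp add: eivl_def)
  have "eventually (\<lambda>y. x < y) at_top" by (rule eventually_gt_at_top)
  then show ?thesis unfolding at_left_e_def using PInf
  proof (simp add: eivl_def, elim eventually_mono)
    fix y assume "x < y" then have "ereal x < ereal y" by simp
    then show "a < ereal y \<and> x < y" using ax \<open>x < y\<close> by (meson less_trans)
  qed
next
  case MInf
  then show ?thesis using assms by (auto simp: eivl_def)
qed

lemma EA:
  assumes "x \<in> eivl a b"
  shows "eventually (\<lambda>y. y \<in> eivl a b \<and> y < x) (at_right_e a)"
proof (cases a)
  case (real A)
  then have xB: "A < x" using assms by (auto simp: eivl_def)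
  have xb: "ereal x < b" using assms by (simp add: eivl_def)
  have "eventually (\<lambda>y. y \<in> {A<..<x}) (at_right A)" using eventually_at_right_real[OF xB] .
  then show ?thesis unfolding at_right_e_def using real
  proof (simp add: eivl_def, elim eventually_mono)
    fix y assume "A < y \<and> y < x" then have "ereal y < ereal x" "A < y" "y < x" by auto
    then show "A < y \<and> ereal y < b \<and> y < x" using xb by (meson less_trans)
  qed
next
  case MInf
  have xb: "ereal x < b" using assms by (simp add: eivl_def)
  have "eventually (\<lambda>y. y < x) at_bot" by (rule eventually_gt_at_bot)
  then show ?thesis unfolding at_right_e_def using MInf
  proof (simp add: eivl_def, elim eventually_mono)
    fix y assume "y < x" then have "ereal y < ereal x" by simp
    then show "ereal y < b \<and> y < x" using xb \<open>y < x\<close> by (meson less_trans)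
  qed
next
  case PInf
  then show ?thesis using assms by (auto simp: eivl_def)
qed

lemma nbB: "at_left_e b \<noteq> bot" by (simp add: at_left_e_def)
lemma nbA: "at_right_e a \<noteq> bot" by (simp add: at_right_e_def)



lemma sub_l: assumes "p \<in> eivl a (ereal x0)" "x0 \<in> eivl a b" shows "p \<in> eivl a b" "p < x0"
proof -
  have "a < ereal p" "ereal p < ereal x0" "ereal x0 < b" using assms by (auto simp: eivl_def)
  moreover have "ereal p < b" using calculation(2,3) by (rule less_trans)
  ultimately show "p \<in> eivl a b" "p < x0" by (auto simp: eivl_def)
qed

lemma sub_r: assumes "p \<in> eivl (ereal x0) b" "x0 \<in> eivl a b" shows "p \<in> eivl a b" "x0 < p"
proof -
  have "a < ereal x0" "ereal x0 < ereal p" "ereal p < b" using assms by (auto simp: eivl_def)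
  moreover have "a < ereal p" using calculation(1,2) by (rule less_trans)
  ultimately show "p \<in> eivl a b" "x0 < p" by (auto simp: eivl_def)
qed

lemma lin_aux: "(A::real) < 0 \<Longrightarrow> B < 0 \<Longrightarrow> C \<le> 0 \<Longrightarrow> Z = A + B + C \<Longrightarrow> Z < 0"
  by linarith

lemma uniq_aux:
  fixes \<phi> :: "real \<Rightarrow> real"
  assumes "xb < yb" "a < ereal xb" "ereal yb < b"
    and m: "strict_mono_on (eivl a (ereal yb)) \<phi>"
    and am: "strict_antimono_on (eivl (ereal xb) b) \<phi>"
  shows False
proof -
  define m1 where "m1 = xb + (yb - xb) / 3"
  define m2 where "m2 = xb + 2 * (yb - xb) / 3"
  have o: "xb < m1" "m1 < m2" "m2 < yb" using assms(1) by (auto simp: m1_def m2_def field_simps)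
  have "ereal xb < ereal m1" "ereal m2 < ereal yb" "ereal m1 < ereal yb" "ereal xb < ereal m2"
    using o by auto
  moreover have "ereal m1 < b" "ereal m2 < b" "a < ereal m1" "a < ereal m2"
    using calculation assms(2,3) by (meson less_trans)+
  ultimately have in1: "m1 \<in> eivl a (ereal yb)" "m2 \<in> eivl a (ereal yb)"
    and in2: "m1 \<in> eivl (ereal xb) b" "m2 \<in> eivl (ereal xb) b"
    using assms(2,3) unfolding eivl_def by auto
  have "\<phi> m1 < \<phi> m2" using m in1 o(2) by (simp add: monotone_on_def)
  moreover have "\<phi> m2 < \<phi> m1" using am in2 o(2) by (simp add: monotone_on_def)
  ultimately show False by simp
qed

lemma core:
  fixes a b :: ereal and f g f' g' :: "real \<Rightarrow> real" and Ha :: ereal and c :: real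
  assumes ab: "a < b"
   and fd: "\<And>x. x \<in> eivl a b \<Longrightarrow> (f has_real_derivative f' x) (at x)"
   and gd: "\<And>x. x \<in> eivl a b \<Longrightarrow> (g has_real_derivative g' x) (at x)"
   and gpos: "\<And>x. x \<in> eivl a b \<Longrightarrow> g' x > 0"
   and flim: "(f \<longlongrightarrow> 0) (at_left_e b)"
   and glim: "(g \<longlongrightarrow> 0) (at_left_e b)"
   and Hlim: "((\<lambda>x. ereal (f' x / g' x * g x - f x)) \<longlongrightarrow> Ha) (at_right_e a)"
   and cS: "c \<in> eivl a b"
   and m1: "\<And>x y. x \<in> eivl a b \<Longrightarrow> y \<in> eivl a b \<Longrightarrow> x < y \<Longrightarrow> y < c \<Longrightarrow> f' x / g' x < f' y / g' y"
   and m2: "\<And>x y. x \<in> eivl a b \<Longrightarrow> y \<in> eivl a b \<Longrightarrow> c < x \<Longrightarrow> x < y \<Longrightarrow> f' y / g' y < f' x / g' x"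
  shows "(Ha \<le> 0 \<longrightarrow> strict_antimono_on (eivl a b) (\<lambda>x. f x / g x))
     \<and> (0 < Ha \<longrightarrow> (\<exists>!xb. xb \<in> eivl a b \<and> strict_mono_on (eivl a (ereal xb)) (\<lambda>x. f x / g x)
                  \<and> strict_antimono_on (eivl (ereal xb) b) (\<lambda>x. f x / g x)))"
proof -
  define S where "S = eivl a b"
  define r where "r x = f' x / g' x" for x
  define Hf where "Hf x = r x * g x - f x" for x
  define \<phi> where "\<phi> x = f x / g x" for x
  have btw: "\<And>x y z. x \<in> S \<Longrightarrow> y \<in> S \<Longrightarrow> x \<le> z \<Longrightarrow> z \<le> y \<Longrightarrow> z \<in> S"
    unfolding S_def by (rule eivl_btw)
  have btw2: "\<And>x y z. x \<in> S \<Longrightarrow> y \<in> S \<Longrightarrow> x < z \<Longrightarrow> z < y \<Longrightarrow> z \<in> S"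
    using btw less_imp_le by blast
  have fd': "\<And>x. x \<in> S \<Longrightarrow> (f has_real_derivative f' x) (at x)" unfolding S_def using fd by blast
  have gd': "\<And>x. x \<in> S \<Longrightarrow> (g has_real_derivative g' x) (at x)" unfolding S_def using gd by blast
  have gpos': "\<And>x. x \<in> S \<Longrightarrow> g' x > 0" unfolding S_def using gpos by blast
  have m1': "\<And>x y. x \<in> S \<Longrightarrow> y \<in> S \<Longrightarrow> x < y \<Longrightarrow> y < c \<Longrightarrow> r x < r y"
    unfolding S_def r_def using m1 by blast
  have m2': "\<And>x y. x \<in> S \<Longrightarrow> y \<in> S \<Longrightarrow> c < x \<Longrightarrow> x < y \<Longrightarrow> r y < r x"
    unfolding S_def r_def using m2 by blast
  have cS': "c \<in> S" using cS S_def by simp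
  have EB': "\<And>x. x \<in> S \<Longrightarrow> eventually (\<lambda>y. y \<in> S \<and> x < y) (at_left_e b)"
    unfolding S_def by (rule EB)
  have EA': "\<And>x. x \<in> S \<Longrightarrow> eventually (\<lambda>y. y \<in> S \<and> y < x) (at_right_e a)"
    unfolding S_def by (rule EA)
  have right: "\<And>x. x \<in> S \<Longrightarrow> \<exists>y. y \<in> S \<and> x < y"
    using EB' nbB eventually_happens' by blast
  have left: "\<And>x. x \<in> S \<Longrightarrow> \<exists>y. y \<in> S \<and> y < x"
    using EA' nbA eventually_happens' by blast
  have contf: "\<And>x. x \<in> S \<Longrightarrow> isCont f x" using fd' DERIV_isCont by blast
  have contg: "\<And>x. x \<in> S \<Longrightarrow> isCont g x" using gd' DERIV_isCont by blast
  have MV: "\<And>x y. x \<in> S \<Longrightarrow> y \<in> S \<Longrightarrow> x < y \<Longrightarrow> \<exists>\<xi>. x < \<xi> \<and> \<xi> < y \<and> f y - f x = r \<xi> * (g y - g x)"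
  proof -
    fix x y assume xy: "x \<in> S" "y \<in> S" "x < y"
    have "\<exists>\<xi>. x < \<xi> \<and> \<xi> < y \<and> (f y - f x) * g' \<xi> = (g y - g x) * f' \<xi>"
    proof (rule GMVT'[OF xy(3)])
      fix z assume "x \<le> z" "z \<le> y"
      then have "z \<in> S" using btw[OF xy(1) xy(2)] by blast
      then show "isCont f z" "isCont g z" using contf contg by blast+
    next
      fix z assume "x < z" "z < y"
      then have "z \<in> S" using btw2[OF xy(1) xy(2)] by blast
      then show "DERIV g z :> g' z" "DERIV f z :> f' z" using fd' gd' by blast+
    qed
    then obtain \<xi> where \<xi>: "x < \<xi>" "\<xi> < y" "(f y - f x) * g' \<xi> = (g y - g x) * f' \<xi>" by blast
    have "\<xi> \<in> S" using btw2[OF xy(1) xy(2) \<xi>(1) \<xi>(2)] .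
    then have "g' \<xi> \<noteq> 0" using gpos' by force
    then have "f y - f x = r \<xi> * (g y - g x)" using \<xi>(3) unfolding r_def
      by (simp add: field_simps)
    then show "\<exists>\<xi>. x < \<xi> \<and> \<xi> < y \<and> f y - f x = r \<xi> * (g y - g x)" using \<xi> by blast
  qed
  have ginc: "\<And>x y. x \<in> S \<Longrightarrow> y \<in> S \<Longrightarrow> x < y \<Longrightarrow> g x < g y"
  proof -
    fix x y assume xy: "x \<in> S" "y \<in> S" "x < y"
    show "g x < g y"
    proof (rule DERIV_pos_imp_increasing_open[OF xy(3)])
      fix t assume "x < t" "t < y"
      then have "t \<in> S" using btw2[OF xy(1) xy(2)] by blast
      then show "\<exists>d. DERIV g t :> d \<and> d > 0" using gd' gpos' by blast
    next
      show "continuous_on {x..y} g"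
        by (rule continuous_at_imp_continuous_on) (use btw[OF xy(1) xy(2)] contg in auto)
    qed
  qed
  have gneg: "\<And>x. x \<in> S \<Longrightarrow> g x < 0"
  proof -
    fix x assume x: "x \<in> S"
    obtain y where y: "y \<in> S" "x < y" using right x by blast
    have "eventually (\<lambda>z. g y \<le> g z) (at_left_e b)"
      using EB'[OF y(1)] by (rule eventually_mono) (use ginc y in \<open>auto intro: less_imp_le\<close>)
    then have "g y \<le> 0" using tendsto_le[OF nbB glim tendsto_const] by blast
    then show "g x < 0" using ginc[OF x y(1) y(2)] by simp
  qed
  have HNEG: "\<And>x. x \<in> S \<Longrightarrow> c < x \<Longrightarrow> Hf x < 0"
  proof -
    fix x assume x: "x \<in> S" "c < x"
    obtain x1 where x1: "x1 \<in> S" "x < x1" using right x by blast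
    obtain \<xi> where \<xi>: "x < \<xi>" "\<xi> < x1" "f x1 - f x = r \<xi> * (g x1 - g x)" using MV[OF x(1) x1] by blast
    have \<xi>S: "\<xi> \<in> S" using btw2[OF x(1) x1(1) \<xi>(1) \<xi>(2)] .
    have ev: "eventually (\<lambda>y. f y - f x1 \<le> r x1 * (g y - g x1)) (at_left_e b)"
      using EB'[OF x1(1)]
    proof (rule eventually_mono)
      fix y assume y: "y \<in> S \<and> x1 < y"
      obtain \<eta> where \<eta>: "x1 < \<eta>" "\<eta> < y" "f y - f x1 = r \<eta> * (g y - g x1)" using MV x1 y by blast
      have "\<eta> \<in> S" using btw2[of x1 y \<eta>] x1 y \<eta> by blast
      then have "r \<eta> < r x1" using m2' x1 \<eta> x by force
      moreover have "g y - g x1 > 0" using ginc x1 y by force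
      ultimately show "f y - f x1 \<le> r x1 * (g y - g x1)" using \<eta>(3) by (simp add: mult_right_mono)
    qed
    have l1: "((\<lambda>y. f y - f x1) \<longlongrightarrow> 0 - f x1) (at_left_e b)" by (intro tendsto_intros flim)
    have l2: "((\<lambda>y. r x1 * (g y - g x1)) \<longlongrightarrow> r x1 * (0 - g x1)) (at_left_e b)" by (intro tendsto_intros glim)
    have lim: "0 - f x1 \<le> r x1 * (0 - g x1)" using tendsto_le[OF nbB l2 l1 ev] .
    have r1: "r \<xi> < r x" using m2' x \<xi>S \<xi> by blast
    have r2: "r x1 < r \<xi>" using m2' \<xi>S x1 \<xi> x by force
    have p1: "(r x - r \<xi>) * g x < 0" using r1 gneg[OF x(1)] by (simp add: mult_pos_neg)
    have p2: "(r \<xi> - r x1) * g x1 < 0" using r2 gneg[OF x1(1)] by (simp add: mult_pos_neg)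
    have e1: "(r x - r \<xi>) * g x = r x * g x - r \<xi> * g x" by (simp add: algebra_simps)
    have e2: "(r \<xi> - r x1) * g x1 = r \<xi> * g x1 - r x1 * g x1" by (simp add: algebra_simps)
    have e3: "r \<xi> * (g x1 - g x) = r \<xi> * g x1 - r \<xi> * g x" by (simp add: algebra_simps)
    have e4: "r x1 * (0 - g x1) = - (r x1 * g x1)" by simp
    have fx: "f x = f x1 - r \<xi> * (g x1 - g x)" using \<xi>(3) by simp
    have B: "r x1 * g x1 - f x1 \<le> 0" using lim by simp
    show "Hf x < 0"
    proof (rule lin_aux[OF p1 p2 B])
      show "Hf x = (r x - r \<xi>) * g x + (r \<xi> - r x1) * g x1 + (r x1 * g x1 - f x1)"
        unfolding Hf_def fx by (simp add: algebra_simps)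
    qed
  qed
  have HDEC: "\<And>x y. x \<in> S \<Longrightarrow> y \<in> S \<Longrightarrow> x < y \<Longrightarrow> y < c \<Longrightarrow> Hf y < Hf x"
  proof -
    fix x y assume xy: "x \<in> S" "y \<in> S" "x < y" "y < c"
    obtain \<xi> where \<xi>: "x < \<xi>" "\<xi> < y" "f y - f x = r \<xi> * (g y - g x)" using MV xy by blast
    have \<xi>S: "\<xi> \<in> S" using btw2[OF xy(1) xy(2) \<xi>(1) \<xi>(2)] .
    have r1: "r x < r \<xi>" using m1' xy \<xi>S \<xi> by force
    have r2: "r \<xi> < r y" using m1' xy \<xi>S \<xi> by force
    have p1: "(r y - r \<xi>) * g y < 0" using r2 gneg[OF xy(2)] by (simp add: mult_pos_neg)
    have p2: "(r \<xi> - r x) * g x < 0" using r1 gneg[OF xy(1)] by (simp add: mult_pos_neg)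
    have e1: "(r y - r \<xi>) * g y = r y * g y - r \<xi> * g y" by (simp add: algebra_simps)
    have e2: "(r \<xi> - r x) * g x = r \<xi> * g x - r x * g x" by (simp add: algebra_simps)
    have e3: "r \<xi> * (g y - g x) = r \<xi> * g y - r \<xi> * g x" by (simp add: algebra_simps)
    have fy: "f y = f x + r \<xi> * (g y - g x)" using \<xi>(3) by simp
    have "Hf y - Hf x = (r y - r \<xi>) * g y + (r \<xi> - r x) * g x + 0"
      unfolding Hf_def fy by (simp add: algebra_simps)
    from lin_aux[OF p1 p2 order_refl this] show "Hf y < Hf x" by simp
  qed
  have PHI: "\<And>x. x \<in> S \<Longrightarrow> (\<phi> has_real_derivative (g' x * Hf x / (g x)^2)) (at x)"
  proof -
    fix x assume x: "x \<in> S"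
    have gx: "g x \<noteq> 0" using gneg[OF x] by simp
    have g'x: "g' x \<noteq> 0" using gpos'[OF x] by simp
    have d: "((\<lambda>x. f x / g x) has_real_derivative ((f' x * g x - f x * g' x) / (g x * g x))) (at x)"
      by (rule DERIV_divide[OF fd'[OF x] gd'[OF x] gx])
    have eq: "(f' x * g x - f x * g' x) / (g x * g x) = g' x * Hf x / (g x)^2"
      unfolding Hf_def r_def using g'x gx by (simp add: field_simps power2_eq_square)
    show "(\<phi> has_real_derivative (g' x * Hf x / (g x)^2)) (at x)"
      using d unfolding eq \<phi>_def[abs_def] .
  qed
  have contphi: "\<And>p q. p \<in> S \<Longrightarrow> q \<in> S \<Longrightarrow> continuous_on {p..q} \<phi>"
  proof -
    fix p q assume pq: "p \<in> S" "q \<in> S"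
    show "continuous_on {p..q} \<phi>"
    proof (rule continuous_at_imp_continuous_on, rule ballI)
      fix z assume "z \<in> {p..q}"
      then have "z \<in> S" using btw[OF pq] by auto
      then show "isCont \<phi> z" using PHI DERIV_isCont by blast
    qed
  qed
  have INC: "\<And>p q. p \<in> S \<Longrightarrow> q \<in> S \<Longrightarrow> p < q \<Longrightarrow> (\<And>t. p < t \<Longrightarrow> t < q \<Longrightarrow> 0 < Hf t) \<Longrightarrow> \<phi> p < \<phi> q"
  proof -
    fix p q assume pq: "p \<in> S" "q \<in> S" "p < q" and H: "\<And>t. p < t \<Longrightarrow> t < q \<Longrightarrow> 0 < Hf t"
    show "\<phi> p < \<phi> q"
    proof (rule DERIV_pos_imp_increasing_open[OF pq(3)])
      fix t assume t: "p < t" "t < q"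
      then have tS: "t \<in> S" using btw2[OF pq(1) pq(2)] by blast
      have "0 < g' t * Hf t / (g t)^2" using gpos'[OF tS] H[OF t] gneg[OF tS] by simp
      then show "\<exists>d. DERIV \<phi> t :> d \<and> d > 0" using PHI[OF tS] by blast
    qed (rule contphi[OF pq(1,2)])
  qed
  have DEC: "\<And>p q. p \<in> S \<Longrightarrow> q \<in> S \<Longrightarrow> p < q \<Longrightarrow> (\<And>t. p < t \<Longrightarrow> t < q \<Longrightarrow> Hf t < 0) \<Longrightarrow> \<phi> q < \<phi> p"
  proof -
    fix p q assume pq: "p \<in> S" "q \<in> S" "p < q" and H: "\<And>t. p < t \<Longrightarrow> t < q \<Longrightarrow> Hf t < 0"
    show "\<phi> q < \<phi> p"
    proof (rule DERIV_neg_imp_decreasing_open[OF pq(3)])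
      fix t assume t: "p < t" "t < q"
      then have tS: "t \<in> S" using btw2[OF pq(1) pq(2)] by blast
      have "g' t * Hf t < 0" using gpos'[OF tS] H[OF t] by (simp add: mult_pos_neg)
      then have "g' t * Hf t / (g t)^2 < 0" using gneg[OF tS] by (simp add: divide_neg_pos)
      then show "\<exists>d. DERIV \<phi> t :> d \<and> d < 0" using PHI[OF tS] by blast
    qed (rule contphi[OF pq(1,2)])
  qed
  have DECc: "\<And>p q. p \<in> S \<Longrightarrow> q \<in> S \<Longrightarrow> p < q \<Longrightarrow> (\<And>t. p < t \<Longrightarrow> t < q \<Longrightarrow> t \<noteq> c \<Longrightarrow> Hf t < 0) \<Longrightarrow> \<phi> q < \<phi> p"
  proof -
    fix p q assume pq: "p \<in> S" "q \<in> S" "p < q" and H: "\<And>t. p < t \<Longrightarrow> t < q \<Longrightarrow> t \<noteq> c \<Longrightarrow> Hf t < 0"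
    show "\<phi> q < \<phi> p"
    proof (cases "p < c \<and> c < q")
      case True
      have "\<phi> c < \<phi> p" using DEC[OF pq(1) cS'] True H by force
      moreover have "\<phi> q < \<phi> c" using DEC[OF cS' pq(2)] True H by force
      ultimately show ?thesis by simp
    next
      case False
      then show ?thesis using DEC[OF pq] H by force
    qed
  qed
  have Hlim': "((\<lambda>x. ereal (Hf x)) \<longlongrightarrow> Ha) (at_right_e a)"
    using Hlim unfolding Hf_def r_def .
  have lowbound: "\<And>s. s \<in> S \<Longrightarrow> s < c \<Longrightarrow> ereal (Hf s) \<le> Ha"
  proof -
    fix s assume s: "s \<in> S" "s < c"
    have "eventually (\<lambda>y. ereal (Hf s) \<le> ereal (Hf y)) (at_right_e a)"
      using EA'[OF s(1)] by (rule eventually_mono) (use HDEC s in \<open>auto intro: less_imp_le\<close>)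
    then show "ereal (Hf s) \<le> Ha" using tendsto_le[OF nbA Hlim' tendsto_const] by blast
  qed
  have SS: "\<And>x. x \<in> S \<longleftrightarrow> a < ereal x \<and> ereal x < b" unfolding S_def eivl_def by simp
  have partI: "Ha \<le> 0 \<longrightarrow> strict_antimono_on S \<phi>"
  proof
    assume Ha: "Ha \<le> 0"
    have neg: "\<And>t. t \<in> S \<Longrightarrow> t \<noteq> c \<Longrightarrow> Hf t < 0"
    proof -
      fix t assume t: "t \<in> S" "t \<noteq> c"
      show "Hf t < 0"
      proof (cases "c < t")
        case True then show ?thesis using HNEG t by blast
      next
        case False
        then have tc: "t < c" using t by simp
        obtain s where s: "s \<in> S" "s < t" using left t by blast
        have sc: "s < c" using s tc by simp
        have "ereal (Hf s) \<le> 0" using order_trans[OF lowbound[OF s(1) sc] Ha] .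
        then have "Hf s \<le> 0" by simp
        moreover have "Hf t < Hf s" using HDEC s t tc by blast
        ultimately show ?thesis by simp
      qed
    qed
    show "strict_antimono_on S \<phi>"
    proof (rule monotone_onI)
      fix p q assume pq: "p \<in> S" "q \<in> S" "p < q"
      show "\<phi> q < \<phi> p"
      proof (rule DECc[OF pq])
        fix t assume "p < t" "t < q" "t \<noteq> c"
        then show "Hf t < 0" using neg btw2[OF pq(1) pq(2)] by blast
      qed
    qed
  qed
  have partII: "0 < Ha \<longrightarrow> (\<exists>!xb. xb \<in> S \<and> strict_mono_on (eivl a (ereal xb)) \<phi>
                  \<and> strict_antimono_on (eivl (ereal xb) b) \<phi>)"
  proof
    assume Ha: "0 < Ha"
    have ev0: "eventually (\<lambda>y. 0 < ereal (Hf y)) (at_right_e a)"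
      using order_tendstoD(1)[OF Hlim' Ha] .
    obtain p0 where p0: "0 < ereal (Hf p0)" "p0 \<in> S" "p0 < c"
      using eventually_happens'[OF nbA eventually_conj[OF ev0 EA'[OF cS']]] by blast
    define P where "P = {t. t \<in> S \<and> t < c \<and> 0 < Hf t}"
    have p0P: "p0 \<in> P" using p0 unfolding P_def by simp
    have Pne: "P \<noteq> {}" using p0P by blast
    have Pbdd: "bdd_above P" unfolding P_def by (rule bdd_aboveI[of _ c]) auto
    define x0 where "x0 = Sup P"
    have p0x0: "p0 \<le> x0" unfolding x0_def using cSup_upper[OF p0P Pbdd] .
    have x0c: "x0 \<le> c" unfolding x0_def by (rule cSup_least[OF Pne]) (auto simp: P_def)
    have x0S: "x0 \<in> S" using btw[OF p0(2) cS' p0x0 x0c] .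
    have below: "\<And>t. t \<in> S \<Longrightarrow> t < x0 \<Longrightarrow> 0 < Hf t"
    proof -
      fix t assume t: "t \<in> S" "t < x0"
      then obtain p where p: "p \<in> P" "t < p" using less_cSup_iff[OF Pne Pbdd] x0_def by blast
      then have "p \<in> S" "p < c" "0 < Hf p" unfolding P_def by auto
      then show "0 < Hf t" using HDEC[OF t(1)] p by force
    qed
    have above: "\<And>t. t \<in> S \<Longrightarrow> x0 < t \<Longrightarrow> t \<noteq> c \<Longrightarrow> Hf t < 0"
    proof -
      fix t assume t: "t \<in> S" "x0 < t" "t \<noteq> c"
      show "Hf t < 0"
      proof (cases "c < t")
        case True then show ?thesis using HNEG t by blast
      next
        case False
        then have tc: "t < c" using t by simp
        define t' where "t' = (x0 + t) / 2"
        have t': "x0 < t'" "t' < t" using t(2) unfolding t'_def by auto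
        have t'S: "t' \<in> S" using btw[OF x0S t(1)] t' by simp
        have "t' \<notin> P"
        proof
          assume "t' \<in> P"
          then have "t' \<le> x0" unfolding x0_def using cSup_upper[OF _ Pbdd] by blast
          then show False using t' by simp
        qed
        then have "Hf t' \<le> 0" using t'S t' tc unfolding P_def by auto
        moreover have "Hf t < Hf t'" using HDEC[OF t'S t(1) t'(2) tc] .
        ultimately show ?thesis by simp
      qed
    qed
    have mono1: "strict_mono_on (eivl a (ereal x0)) \<phi>"
    proof (rule monotone_onI)
      fix p q assume pq: "p \<in> eivl a (ereal x0)" "q \<in> eivl a (ereal x0)" "p < q"
      have pS: "p \<in> S" "p < x0" using sub_l[OF pq(1) x0S[unfolded S_def]] unfolding S_def by auto
      have qS: "q \<in> S" "q < x0" using sub_l[OF pq(2) x0S[unfolded S_def]] unfolding S_def by auto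
      show "\<phi> p < \<phi> q"
      proof (rule INC[OF pS(1) qS(1) pq(3)])
        fix t assume "p < t" "t < q"
        then show "0 < Hf t" using below btw2[OF pS(1) qS(1)] qS(2) by force
      qed
    qed
    have mono2: "strict_antimono_on (eivl (ereal x0) b) \<phi>"
    proof (rule monotone_onI)
      fix p q assume pq: "p \<in> eivl (ereal x0) b" "q \<in> eivl (ereal x0) b" "p < q"
      have pS: "p \<in> S" "x0 < p" using sub_r[OF pq(1) x0S[unfolded S_def]] unfolding S_def by auto
      have qS: "q \<in> S" "x0 < q" using sub_r[OF pq(2) x0S[unfolded S_def]] unfolding S_def by auto
      show "\<phi> q < \<phi> p"
      proof (rule DECc[OF pS(1) qS(1) pq(3)])
        fix t assume "p < t" "t < q" "t \<noteq> c"
        then show "Hf t < 0" using above btw2[OF pS(1) qS(1)] pS(2) by force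
      qed
    qed
    show "\<exists>!xb. xb \<in> S \<and> strict_mono_on (eivl a (ereal xb)) \<phi> \<and> strict_antimono_on (eivl (ereal xb) b) \<phi>"
    proof (rule ex1I[of _ x0])
      show "x0 \<in> S \<and> strict_mono_on (eivl a (ereal x0)) \<phi> \<and> strict_antimono_on (eivl (ereal x0) b) \<phi>"
        using x0S mono1 mono2 by blast
    next
      fix y assume y: "y \<in> S \<and> strict_mono_on (eivl a (ereal y)) \<phi> \<and> strict_antimono_on (eivl (ereal y) b) \<phi>"
      show "y = x0"
      proof (rule linorder_cases[of y x0])
        assume "y < x0"
        then show ?thesis using uniq_aux[of y x0 a b \<phi>] y x0S mono1 unfolding SS by blast
      next
        assume "x0 < y"
        then show ?thesis using uniq_aux[of x0 y a b \<phi>] y x0S mono2 unfolding SS by blast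
      qed
    qed
  qed
  show ?thesis using partI partII unfolding S_def \<phi>_def[abs_def] by blast
qed



lemma neg_smono[simp]: "strict_mono_on A (\<lambda>x. - (h x :: real)) \<longleftrightarrow> strict_antimono_on A h"
  by (simp add: monotone_on_def)
lemma neg_santimono[simp]: "strict_antimono_on A (\<lambda>x. - (h x :: real)) \<longleftrightarrow> strict_mono_on A h"
  by (simp add: monotone_on_def)

lemma sub1: "x \<in> eivl a b \<Longrightarrow> x < c \<Longrightarrow> x \<in> eivl a (ereal c)" by (simp add: eivl_def)
lemma sub2: "x \<in> eivl a b \<Longrightarrow> c < x \<Longrightarrow> x \<in> eivl (ereal c) b" by (simp add: eivl_def)

theorem mainTheorem4:
  fixes a b :: ereal and f g :: "real \<Rightarrow> real" and Ha :: ereal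
  assumes ab: "a < b"
    and fdiff: "\<forall>x\<in>eivl a b. f differentiable (at x)"
    and gdiff: "\<forall>x\<in>eivl a b. g differentiable (at x)"
    and g'nz: "\<forall>x\<in>eivl a b. deriv g x \<noteq> 0"
    and flim: "(f \<longlongrightarrow> 0) (at_left_e b)"
    and glim: "(g \<longlongrightarrow> 0) (at_left_e b)"
    and Hlim: "((\<lambda>x. ereal (H f g x)) \<longlongrightarrow> Ha) (at_right_e a)"
  shows
   "((\<exists>c\<in>eivl a b. strict_mono_on (eivl a (ereal c)) (\<lambda>x. deriv f x / deriv g x)
        \<and> strict_antimono_on (eivl (ereal c) b) (\<lambda>x. deriv f x / deriv g x)) \<longrightarrow>
      ((((\<forall>x\<in>eivl a b. deriv g x > 0) \<and> Ha \<le> 0) \<or> ((\<forall>x\<in>eivl a b. deriv g x < 0) \<and> Ha \<ge> 0))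
         \<longrightarrow> strict_antimono_on (eivl a b) (\<lambda>x. f x / g x))
    \<and> ((((\<forall>x\<in>eivl a b. deriv g x > 0) \<and> Ha > 0) \<or> ((\<forall>x\<in>eivl a b. deriv g x < 0) \<and> Ha < 0))
         \<longrightarrow> (\<exists>!xb. xb \<in> eivl a b \<and> strict_mono_on (eivl a (ereal xb)) (\<lambda>x. f x / g x)
                  \<and> strict_antimono_on (eivl (ereal xb) b) (\<lambda>x. f x / g x))))
  \<and> ((\<exists>c\<in>eivl a b. strict_antimono_on (eivl a (ereal c)) (\<lambda>x. deriv f x / deriv g x)
        \<and> strict_mono_on (eivl (ereal c) b) (\<lambda>x. deriv f x / deriv g x)) \<longrightarrow>
      ((((\<forall>x\<in>eivl a b. deriv g x > 0) \<and> Ha \<ge> 0) \<or> ((\<forall>x\<in>eivl a b. deriv g x < 0) \<and> Ha \<le> 0))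
         \<longrightarrow> strict_mono_on (eivl a b) (\<lambda>x. f x / g x))
    \<and> ((((\<forall>x\<in>eivl a b. deriv g x > 0) \<and> Ha < 0) \<or> ((\<forall>x\<in>eivl a b. deriv g x < 0) \<and> Ha > 0))
         \<longrightarrow> (\<exists>!xb. xb \<in> eivl a b \<and> strict_antimono_on (eivl a (ereal xb)) (\<lambda>x. f x / g x)
                  \<and> strict_mono_on (eivl (ereal xb) b) (\<lambda>x. f x / g x))))"
proof -
  have fd: "\<And>x. x \<in> eivl a b \<Longrightarrow> (f has_real_derivative deriv f x) (at x)"
    using fdiff DERIV_deriv_iff_real_differentiable by blast
  have gd: "\<And>x. x \<in> eivl a b \<Longrightarrow> (g has_real_derivative deriv g x) (at x)"
    using gdiff DERIV_deriv_iff_real_differentiable by blast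
  have fdn: "\<And>x. x \<in> eivl a b \<Longrightarrow> ((\<lambda>x. - f x) has_real_derivative - deriv f x) (at x)"
    using fd DERIV_minus by blast
  have gdn: "\<And>x. x \<in> eivl a b \<Longrightarrow> ((\<lambda>x. - g x) has_real_derivative - deriv g x) (at x)"
    using gd DERIV_minus by blast
  have flimn: "((\<lambda>x. - f x) \<longlongrightarrow> 0) (at_left_e b)" using tendsto_minus[OF flim] by simp
  have glimn: "((\<lambda>x. - g x) \<longlongrightarrow> 0) (at_left_e b)" using tendsto_minus[OF glim] by simp
  have HL: "((\<lambda>x. ereal (deriv f x / deriv g x * g x - f x)) \<longlongrightarrow> Ha) (at_right_e a)"
    using Hlim unfolding H_def .
  have HLm: "((\<lambda>x. - ereal (deriv f x / deriv g x * g x - f x)) \<longlongrightarrow> - Ha) (at_right_e a)"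
    using tendsto_uminus_ereal[OF HL] .
  have HL1: "((\<lambda>x. ereal (- deriv f x / - deriv g x * - g x - - f x)) \<longlongrightarrow> - Ha) (at_right_e a)"
  proof -
    have "(\<lambda>x. ereal (- deriv f x / - deriv g x * - g x - - f x)) = (\<lambda>x. - ereal (deriv f x / deriv g x * g x - f x))"
      by (rule ext) (simp add: algebra_simps)
    then show ?thesis using HLm by simp
  qed
  have HL2: "((\<lambda>x. ereal (- deriv f x / deriv g x * g x - - f x)) \<longlongrightarrow> - Ha) (at_right_e a)"
  proof -
    have "(\<lambda>x. ereal (- deriv f x / deriv g x * g x - - f x)) = (\<lambda>x. - ereal (deriv f x / deriv g x * g x - f x))"
      by (rule ext) (simp add: algebra_simps)
    then show ?thesis using HLm by simp
  qed
  have HL3: "((\<lambda>x. ereal (deriv f x / - deriv g x * - g x - f x)) \<longlongrightarrow> Ha) (at_right_e a)"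
  proof -
    have "(\<lambda>x. ereal (deriv f x / - deriv g x * - g x - f x)) = (\<lambda>x. ereal (deriv f x / deriv g x * g x - f x))"
      by (rule ext) simp
    then show ?thesis using HL by simp
  qed
  define R where "R x = deriv f x / deriv g x" for x
  have partA: "(\<exists>c\<in>eivl a b. strict_mono_on (eivl a (ereal c)) (\<lambda>x. deriv f x / deriv g x)
        \<and> strict_antimono_on (eivl (ereal c) b) (\<lambda>x. deriv f x / deriv g x)) \<longrightarrow>
      ((((\<forall>x\<in>eivl a b. deriv g x > 0) \<and> Ha \<le> 0) \<or> ((\<forall>x\<in>eivl a b. deriv g x < 0) \<and> Ha \<ge> 0))
         \<longrightarrow> strict_antimono_on (eivl a b) (\<lambda>x. f x / g x))
    \<and> ((((\<forall>x\<in>eivl a b. deriv g x > 0) \<and> Ha > 0) \<or> ((\<forall>x\<in>eivl a b. deriv g x < 0) \<and> Ha < 0))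
         \<longrightarrow> (\<exists>!xb. xb \<in> eivl a b \<and> strict_mono_on (eivl a (ereal xb)) (\<lambda>x. f x / g x)
                  \<and> strict_antimono_on (eivl (ereal xb) b) (\<lambda>x. f x / g x)))"
  proof
    assume "\<exists>c\<in>eivl a b. strict_mono_on (eivl a (ereal c)) (\<lambda>x. deriv f x / deriv g x)
        \<and> strict_antimono_on (eivl (ereal c) b) (\<lambda>x. deriv f x / deriv g x)"
    then obtain c where cS: "c \<in> eivl a b" and
      mo: "strict_mono_on (eivl a (ereal c)) (\<lambda>x. deriv f x / deriv g x)" and
      am: "strict_antimono_on (eivl (ereal c) b) (\<lambda>x. deriv f x / deriv g x)" by blast
    have m1: "\<And>x y. x \<in> eivl a b \<Longrightarrow> y \<in> eivl a b \<Longrightarrow> x < y \<Longrightarrow> y < c \<Longrightarrow> deriv f x / deriv g x < deriv f y / deriv g y"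
    proof -
      fix x y assume xy: "x \<in> eivl a b" "y \<in> eivl a b" "x < y" "y < c"
      have "x \<in> eivl a (ereal c)" "y \<in> eivl a (ereal c)" using xy by (auto simp: eivl_def)
      then show "deriv f x / deriv g x < deriv f y / deriv g y" using mo \<open>x < y\<close> by (simp add: monotone_on_def)
    qed
    have m2: "\<And>x y. x \<in> eivl a b \<Longrightarrow> y \<in> eivl a b \<Longrightarrow> c < x \<Longrightarrow> x < y \<Longrightarrow> deriv f y / deriv g y < deriv f x / deriv g x"
    proof -
      fix x y assume xy: "x \<in> eivl a b" "y \<in> eivl a b" "c < x" "x < y"
      have "x \<in> eivl (ereal c) b" "y \<in> eivl (ereal c) b" using xy by (auto simp: eivl_def)
      then show "deriv f y / deriv g y < deriv f x / deriv g x" using am \<open>x < y\<close> by (simp add: monotone_on_def)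
    qed
    have P1: "(\<forall>x\<in>eivl a b. deriv g x > 0) \<Longrightarrow> (Ha \<le> 0 \<longrightarrow> strict_antimono_on (eivl a b) (\<lambda>x. f x / g x))
     \<and> (0 < Ha \<longrightarrow> (\<exists>!xb. xb \<in> eivl a b \<and> strict_mono_on (eivl a (ereal xb)) (\<lambda>x. f x / g x)
                  \<and> strict_antimono_on (eivl (ereal xb) b) (\<lambda>x. f x / g x)))"
      using core[OF ab fd gd _ flim glim HL cS m1 m2] by blast
    have P2: "(\<forall>x\<in>eivl a b. deriv g x < 0) \<Longrightarrow> (- Ha \<le> 0 \<longrightarrow> strict_antimono_on (eivl a b) (\<lambda>x. - f x / - g x))
     \<and> (0 < - Ha \<longrightarrow> (\<exists>!xb. xb \<in> eivl a b \<and> strict_mono_on (eivl a (ereal xb)) (\<lambda>x. - f x / - g x)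
                  \<and> strict_antimono_on (eivl (ereal xb) b) (\<lambda>x. - f x / - g x)))"
      by (rule core[OF ab fdn gdn _ flimn glimn HL1 cS]) (use m1 m2 in auto)
    show "((((\<forall>x\<in>eivl a b. deriv g x > 0) \<and> Ha \<le> 0) \<or> ((\<forall>x\<in>eivl a b. deriv g x < 0) \<and> Ha \<ge> 0))
         \<longrightarrow> strict_antimono_on (eivl a b) (\<lambda>x. f x / g x))
    \<and> ((((\<forall>x\<in>eivl a b. deriv g x > 0) \<and> Ha > 0) \<or> ((\<forall>x\<in>eivl a b. deriv g x < 0) \<and> Ha < 0))
         \<longrightarrow> (\<exists>!xb. xb \<in> eivl a b \<and> strict_mono_on (eivl a (ereal xb)) (\<lambda>x. f x / g x)
                  \<and> strict_antimono_on (eivl (ereal xb) b) (\<lambda>x. f x / g x)))"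
      using P1 P2 by (simp add: ereal_uminus_le_reorder ereal_uminus_less_reorder; blast?)
  qed
  have partB: "(\<exists>c\<in>eivl a b. strict_antimono_on (eivl a (ereal c)) (\<lambda>x. deriv f x / deriv g x)
        \<and> strict_mono_on (eivl (ereal c) b) (\<lambda>x. deriv f x / deriv g x)) \<longrightarrow>
      ((((\<forall>x\<in>eivl a b. deriv g x > 0) \<and> Ha \<ge> 0) \<or> ((\<forall>x\<in>eivl a b. deriv g x < 0) \<and> Ha \<le> 0))
         \<longrightarrow> strict_mono_on (eivl a b) (\<lambda>x. f x / g x))
    \<and> ((((\<forall>x\<in>eivl a b. deriv g x > 0) \<and> Ha < 0) \<or> ((\<forall>x\<in>eivl a b. deriv g x < 0) \<and> Ha > 0))
         \<longrightarrow> (\<exists>!xb. xb \<in> eivl a b \<and> strict_antimono_on (eivl a (ereal xb)) (\<lambda>x. f x / g x)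
                  \<and> strict_mono_on (eivl (ereal xb) b) (\<lambda>x. f x / g x)))"
  proof
    assume "\<exists>c\<in>eivl a b. strict_antimono_on (eivl a (ereal c)) (\<lambda>x. deriv f x / deriv g x)
        \<and> strict_mono_on (eivl (ereal c) b) (\<lambda>x. deriv f x / deriv g x)"
    then obtain c where cS: "c \<in> eivl a b" and
      am: "strict_antimono_on (eivl a (ereal c)) (\<lambda>x. deriv f x / deriv g x)" and
      mo: "strict_mono_on (eivl (ereal c) b) (\<lambda>x. deriv f x / deriv g x)" by blast
    have m1: "\<And>x y. x \<in> eivl a b \<Longrightarrow> y \<in> eivl a b \<Longrightarrow> x < y \<Longrightarrow> y < c \<Longrightarrow> deriv f y / deriv g y < deriv f x / deriv g x"
    proof -
      fix x y assume xy: "x \<in> eivl a b" "y \<in> eivl a b" "x < y" "y < c"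
      have "x \<in> eivl a (ereal c)" "y \<in> eivl a (ereal c)" using xy by (auto simp: eivl_def)
      then show "deriv f y / deriv g y < deriv f x / deriv g x" using am \<open>x < y\<close> by (simp add: monotone_on_def)
    qed
    have m2: "\<And>x y. x \<in> eivl a b \<Longrightarrow> y \<in> eivl a b \<Longrightarrow> c < x \<Longrightarrow> x < y \<Longrightarrow> deriv f x / deriv g x < deriv f y / deriv g y"
    proof -
      fix x y assume xy: "x \<in> eivl a b" "y \<in> eivl a b" "c < x" "x < y"
      have "x \<in> eivl (ereal c) b" "y \<in> eivl (ereal c) b" using xy by (auto simp: eivl_def)
      then show "deriv f x / deriv g x < deriv f y / deriv g y" using mo \<open>x < y\<close> by (simp add: monotone_on_def)
    qed
    have P1: "(\<forall>x\<in>eivl a b. deriv g x > 0) \<Longrightarrow> (- Ha \<le> 0 \<longrightarrow> strict_antimono_on (eivl a b) (\<lambda>x. - f x / g x))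
     \<and> (0 < - Ha \<longrightarrow> (\<exists>!xb. xb \<in> eivl a b \<and> strict_mono_on (eivl a (ereal xb)) (\<lambda>x. - f x / g x)
                  \<and> strict_antimono_on (eivl (ereal xb) b) (\<lambda>x. - f x / g x)))"
      by (rule core[OF ab fdn gd _ flimn glim HL2 cS]) (use m1 m2 in auto)
    have P2: "(\<forall>x\<in>eivl a b. deriv g x < 0) \<Longrightarrow> (Ha \<le> 0 \<longrightarrow> strict_antimono_on (eivl a b) (\<lambda>x. f x / - g x))
     \<and> (0 < Ha \<longrightarrow> (\<exists>!xb. xb \<in> eivl a b \<and> strict_mono_on (eivl a (ereal xb)) (\<lambda>x. f x / - g x)
                  \<and> strict_antimono_on (eivl (ereal xb) b) (\<lambda>x. f x / - g x)))"
      by (rule core[OF ab fd gdn _ flim glimn HL3 cS]) (use m1 m2 in auto)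
    show "((((\<forall>x\<in>eivl a b. deriv g x > 0) \<and> Ha \<ge> 0) \<or> ((\<forall>x\<in>eivl a b. deriv g x < 0) \<and> Ha \<le> 0))
         \<longrightarrow> strict_mono_on (eivl a b) (\<lambda>x. f x / g x))
    \<and> ((((\<forall>x\<in>eivl a b. deriv g x > 0) \<and> Ha < 0) \<or> ((\<forall>x\<in>eivl a b. deriv g x < 0) \<and> Ha > 0))
         \<longrightarrow> (\<exists>!xb. xb \<in> eivl a b \<and> strict_antimono_on (eivl a (ereal xb)) (\<lambda>x. f x / g x)
                  \<and> strict_mono_on (eivl (ereal xb) b) (\<lambda>x. f x / g x)))"
      using P1 P2 by (simp add: ereal_uminus_le_reorder ereal_uminus_less_reorder; blast?)
  qed
  show ?thesis using partA partB by blast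
qed


end
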